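(* Let $n\ge 3$ be an integer, $\varepsilon=e^{2\pi i/n}$, and let $a\in\mathbb{C}\setminus\{0,-1,-2,\dots\}$. Then for every $x\in\mathbb{C}$, $$\prod_{k=0}^{n-1}\frac{G(a-\varepsilon^k x)}{G(a)}=\prod_{m=0}^\infty\Bigl(1-\frac{x^n}{(a+m)^n}\Bigr)^{m+1},$$ the infinite product converging uniformly on compact subsets of $\mathbb{C}$.
   Context: $G$ is the entire function defined by $G(1+x)=(2\pi)^{x/2}\exp\bigl(-\tfrac{x(x+1)}{2}-\tfrac{\gamma x^2}{2}\bigr)\prod_{n=1}^\infty(1+\tfrac xn)^n\exp(-x+\tfrac{x^2}{2n})$, $\gamma$ the Euler constant; its zeros are at $x=-j$, $j=0,1,2,\dots$, with multiplicity $j+1$. *)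

theory Defs
  imports "HOL-Analysis.Analysis"
begin

definition barnesG :: "complex \<Rightarrow> complex" where
  "barnesG z = (let x = z - 1 in
     exp (x / 2 * of_real (ln (2 * pi)))
     * exp (- (x * (x + 1)) / 2 - of_real euler_mascheroni * x\<^sup>2 / 2)
     * (\<Prod>k. (1 + x / of_nat (Suc k)) ^ Suc k
              * exp (- x + x\<^sup>2 / (2 * of_nat (Suc k)))))"

end

theory Submission
  imports Defs "HOL-Complex_Analysis.Complex_Analysis" "HOL-Computational_Algebra.Polynomial" "HOL-Real_Asymp.Real_Asymp"
begin


lemma root_w_pow: "exp (2 * of_real pi * \<i> / of_nat n) ^ j = exp(2 * of_real pi * \<i> * of_nat j / of_nat n)"
  by (simp add: exp_of_nat_mult[symmetric] mult_ac)

lemma root_w_n: assumes "n > 0" shows "exp (2 * of_real pi * \<i> / of_nat n) ^ n = 1"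
  using complex_root_unity[of n n] assms by (simp add: root_w_pow)

lemma root_w_eq1: assumes "n \<ge> 1" shows "exp (2 * of_real pi * \<i> / of_nat n) ^ j = 1 \<longleftrightarrow> n dvd j"
  using complex_root_unity_eq_1[OF assms, of j] by (simp add: root_w_pow)

lemma root_w_inj: assumes "n \<ge> 1" shows "inj_on (\<lambda>k. exp (2 * of_real pi * \<i> / of_nat n) ^ k) {..<n}"
  unfolding inj_on_def root_w_pow using complex_root_unity_eq[OF assms] by auto

lemma root_w_sum: assumes "n \<ge> 1" "\<not> n dvd j"
  shows "(\<Sum>k<n. (exp (2 * of_real pi * \<i> / of_nat n) ^ j) ^ k) = 0"
proof -
  define q where "q = exp (2 * of_real pi * \<i> / of_nat n) ^ j"
  have q1: "q \<noteq> 1" using root_w_eq1[OF assms(1)] assms(2) q_def by auto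
  have "q ^ n = (exp (2 * of_real pi * \<i> / of_nat n) ^ n) ^ j"
    by (simp add: q_def power_mult[symmetric] mult.commute)
  hence qn: "q ^ n = 1" using root_w_n[of n] assms(1) by simp
  show ?thesis using sum_gp_strict[of q n] q1 qn by (simp add: q_def[symmetric])
qed




lemma prod_root_1:
  assumes n: "n \<ge> 1"
  defines "w \<equiv> exp (2 * of_real pi * \<i> / of_nat n)"
  shows "(\<Prod>k<n. (c - w ^ k)) = c ^ n - 1"
proof -
  define p where "p = (\<Prod>k<n. [:- (w ^ k), 1:])"
  define q where "q = monom (1::complex) n - 1"
  have degp: "degree p = n" unfolding p_def
    by (subst degree_prod_sum_eq) auto
  have lcp: "lead_coeff p = 1" unfolding p_def lead_coeff_prod by simp
  have degq: "degree q \<le> n" unfolding q_def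
    by (intro degree_diff_le) (auto simp: degree_monom_le)
  have cq: "coeff q n = 1" using n by (simp add: q_def)
  have "p = q"
  proof (rule poly_eqI_degree_lead_coeff[where n = n and A = "(\<lambda>k. w ^ k) ` {..<n}"])
    show "coeff p n = coeff q n" using lcp degp cq by simp
    show "n \<le> card ((\<lambda>k. w ^ k) ` {..<n})"
      using root_w_inj[OF n] by (simp add: card_image w_def)
    show "degree p \<le> n" using degp by simp
    show "degree q \<le> n" by fact
    fix z assume "z \<in> (\<lambda>k. w ^ k) ` {..<n}"
    then obtain j where j: "j < n" "z = w ^ j" by auto
    have "poly p z = 0" unfolding p_def poly_prod using j
      by (intro prod_zero bexI[of _ j]) auto
    moreover have "poly q z = 0"
    proof -
      have "z ^ n = (w ^ n) ^ j" using j by (simp add: power_mult[symmetric] mult.commute)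
      also have "\<dots> = 1" using root_w_n[of n] n by (simp add: w_def)
      finally show ?thesis by (simp add: q_def poly_monom)
    qed
    ultimately show "poly p z = poly q z" by simp
  qed
  hence "poly p c = poly q c" by simp
  thus ?thesis by (simp add: p_def q_def poly_prod poly_monom)
qed

lemma prod_root:
  assumes n: "n \<ge> 1"
  defines "w \<equiv> exp (2 * of_real pi * \<i> / of_nat n)"
  shows "(\<Prod>k<n. (c - w ^ k * x)) = c ^ n - x ^ n"
proof (cases "x = 0")
  case True thus ?thesis using n by (simp add: power_0_left)
next
  case False
  have "(\<Prod>k<n. (c - w ^ k * x)) = (\<Prod>k<n. x * (c / x - w ^ k))"
    using False by (intro prod.cong) (auto simp: field_simps)
  also have "\<dots> = x ^ n * (\<Prod>k<n. (c / x - w ^ k))" by (simp add: prod.distrib)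
  also have "\<dots> = x ^ n * ((c / x) ^ n - 1)" using prod_root_1[OF n] by (simp add: w_def)
  also have "\<dots> = c ^ n - x ^ n" using False by (simp add: field_simps power_divide)
  finally show ?thesis .
qed




lemma pow_sub1_le: "norm ((w::complex) ^ k - 1) \<le> (1 + norm (w - 1)) ^ k - 1"
proof (induction k)
  case 0 then show ?case by simp
next
  case (Suc k)
  define d where "d = norm (w - 1)"
  have w: "norm w \<le> 1 + d" unfolding d_def using norm_triangle_ineq[of "w - 1" 1] by simp
  have "w ^ Suc k - 1 = w * (w ^ k - 1) + (w - 1)" by (simp add: algebra_simps)
  hence "norm (w ^ Suc k - 1) \<le> norm w * norm (w ^ k - 1) + d"
    by (metis d_def norm_mult norm_triangle_ineq)
  also have "\<dots> \<le> (1 + d) * ((1 + d) ^ k - 1) + d"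
    using Suc w unfolding d_def[symmetric] by (intro add_mono mult_mono) (auto simp: d_def)
  also have "\<dots> = (1 + d) ^ Suc k - 1" by (simp add: algebra_simps)
  finally show ?case by (simp add: d_def)
qed

lemma exp_sub1_le: "(t::real) \<ge> 0 \<Longrightarrow> exp t - 1 \<le> t * exp t"
proof -
  assume t: "t \<ge> 0"
  have "1 - t \<le> exp (- t)" using exp_ge_add_one_self[of "-t"] by simp
  hence "(1 - t) * exp t \<le> exp (-t) * exp t" by (intro mult_right_mono) auto
  thus ?thesis by (simp add: algebra_simps exp_minus_inverse)
qed

lemma pow_sub1_bound:
  assumes "norm ((w::complex) - 1) \<le> B / (real k) ^ 3" "B \<ge> 0" "k \<ge> 1"
  shows "norm (w ^ k - 1) \<le> B * exp B / (real k) ^ 2"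
proof -
  define d where "d = norm (w - 1)"
  have d0: "d \<ge> 0" by (simp add: d_def)
  have k1: "real k \<ge> 1" using assms by simp
  have kd: "real k * d \<le> B / real k ^ 2"
  proof -
    have "real k * d \<le> real k * (B / real k ^ 3)" using assms(1) k1 by (intro mult_left_mono) (auto simp: d_def)
    also have "\<dots> = B / real k ^ 2" using k1 by (simp add: field_simps power3_eq_cube power2_eq_square)
    finally show ?thesis .
  qed
  have kdB: "B / real k ^ 2 \<le> B" using k1 assms(2)
    by (simp add: divide_le_eq_1 field_simps) (metis one_le_power k1 mult_left_mono mult.right_neutral)
  have "norm (w ^ k - 1) \<le> (1 + d) ^ k - 1" using pow_sub1_le by (simp add: d_def)
  also have "(1 + d) ^ k \<le> exp d ^ k"
    using d0 by (intro power_mono) (auto simp: exp_ge_add_one_self add.commute)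
  also have "exp d ^ k = exp (real k * d)" by (simp add: exp_of_nat_mult)
  also have "exp (real k * d) - 1 \<le> (real k * d) * exp (real k * d)" using d0 by (intro exp_sub1_le) simp
  also have "\<dots> \<le> (B / real k ^ 2) * exp B"
    using kd kdB d0 assms(2) by (intro mult_mono) auto
  finally show ?thesis by simp
qed




definition FF :: "nat \<Rightarrow> complex \<Rightarrow> complex" where
  "FF m z = (1 + z / of_nat (Suc m)) ^ Suc m * exp (- z + z\<^sup>2 / (2 * of_nat (Suc m)))"

definition EE :: "complex \<Rightarrow> complex" where
  "EE x = exp (x / 2 * of_real (ln (2 * pi))) * exp (- (x * (x + 1)) / 2 - of_real euler_mascheroni * x\<^sup>2 / 2)"

lemma barnesG_eq: "barnesG z = EE (z - 1) * (\<Prod>m. FF m (z - 1))"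
  unfolding barnesG_def EE_def FF_def Let_def ..

lemma FF_wf: "FF m z = weierstrass_factor 2 (- z / of_nat (Suc m)) ^ Suc m"
proof -
  define s :: complex where "s = of_nat (Suc m)"
  have s0: "s \<noteq> 0" unfolding s_def by (metis of_nat_eq_0_iff nat.distinct(1))
  have wf2: "weierstrass_factor 2 u = (1 - u) * exp (u + u\<^sup>2 / 2)" for u
    by (simp add: weierstrass_factor_def numeral_2_eq_2)
  have "weierstrass_factor 2 (- z / s) ^ Suc m
      = (1 + z / s) ^ Suc m * exp (- z / s + (- z / s)\<^sup>2 / 2) ^ Suc m"
    by (simp only: wf2 power_mult_distrib) simp
  also have "exp (- z / s + (- z / s)\<^sup>2 / 2) ^ Suc m = exp (of_nat (Suc m) * (- z / s + (- z / s)\<^sup>2 / 2))"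
    by (rule exp_of_nat_mult[symmetric])
  also have "of_nat (Suc m) * (- z / s + (- z / s)\<^sup>2 / 2) = - z + z\<^sup>2 / (2 * s)"
    using s0 unfolding s_def[symmetric] by (simp add: field_simps power2_eq_square)
  finally show ?thesis by (simp add: FF_def s_def)
qed

lemma summable_inv_sq: "summable (\<lambda>m. C / (real (Suc m))\<^sup>2)"
proof -
  have "summable (\<lambda>m::nat. 1 / real ((m + 1)\<^sup>2))" using inverse_squares_sums by (rule sums_summable)
  hence "summable (\<lambda>m::nat. 1 / (real m + 1)\<^sup>2)" by (simp add: add.commute)
  hence "summable (\<lambda>m::nat. C * (1 / (real m + 1)\<^sup>2))" by (rule summable_mult)
  thus ?thesis by (simp add: add.commute)
qed

lemma FF_bound:
  assumes "norm z \<le> R" "2 * R \<le> real (Suc m)"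
  shows "norm (FF m z - 1) \<le> (3 * R ^ 3) * exp (3 * R ^ 3) / (real (Suc m))\<^sup>2"
proof -
  have R0: "R \<ge> 0" using assms(1) norm_ge_zero order_trans by blast
  define u where "u = - z / of_nat (Suc m)"
  have nu: "norm u = norm z / real (Suc m)" by (simp only: u_def norm_divide norm_minus_cancel norm_of_nat)
  have "norm u \<le> 1 / 2" unfolding nu using assms by (simp add: field_simps)
  hence "norm (weierstrass_factor 2 u - 1) \<le> 3 * norm u ^ 3"
    using weierstrass_factor_bound[of u 2] by (simp add: numeral_3_eq_3)
  also have "\<dots> = 3 * norm z ^ 3 / real (Suc m) ^ 3" by (simp add: nu power_divide)
  also have "\<dots> \<le> 3 * R ^ 3 / real (Suc m) ^ 3"
    using assms(1) by (intro divide_right_mono mult_left_mono power_mono) auto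
  finally have "norm (weierstrass_factor 2 u ^ Suc m - 1) \<le> (3 * R ^ 3) * exp (3 * R ^ 3) / (real (Suc m))\<^sup>2"
    by (intro pow_sub1_bound) (use R0 in auto)
  thus ?thesis by (simp add: FF_wf u_def)
qed

lemma FF_convergent: "convergent_prod (\<lambda>m. FF m z)"
proof -
  define R where "R = norm z"
  have "summable (\<lambda>m. norm (FF m z - 1))"
  proof (rule summable_comparison_test_ev)
    have "eventually (\<lambda>m. 2 * R \<le> real (Suc m)) sequentially"
      by real_asymp
    thus "eventually (\<lambda>m. norm (norm (FF m z - 1)) \<le> (3 * R ^ 3) * exp (3 * R ^ 3) / (real (Suc m))\<^sup>2) sequentially"
      by eventually_elim (use FF_bound R_def in auto)
  qed (rule summable_inv_sq)
  thus ?thesis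
    using abs_convergent_prod_conv_summable abs_convergent_prod_imp_convergent_prod by blast
qed




lemma quad_sum:
  assumes n: "n \<ge> 3"
  defines "w \<equiv> exp (2 * of_real pi * \<i> / of_nat n)"
  shows "(\<Sum>k<n. \<alpha> * (y - w ^ k * x) + \<beta> * (y - w ^ k * x)\<^sup>2) = of_nat n * (\<alpha> * y + \<beta> * y\<^sup>2)"
proof -
  have s1: "(\<Sum>k<n. w ^ k) = 0" using root_w_sum[of n 1] n by (simp add: w_def)
  have nd2: "\<not> n dvd 2" using n by (auto dest!: dvd_imp_le)
  have s2: "(\<Sum>k<n. (w ^ 2) ^ k) = 0" using root_w_sum[of n 2] n nd2 by (simp add: w_def)
  have eq: "\<alpha> * (y - w ^ k * x) + \<beta> * (y - w ^ k * x)\<^sup>2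
      = (\<alpha> * y + \<beta> * y\<^sup>2) - ((\<alpha> + 2 * \<beta> * y) * x) * w ^ k + (\<beta> * x\<^sup>2) * (w ^ 2) ^ k" for k
  proof -
    have wk: "(w ^ 2) ^ k = w ^ k * w ^ k" by (simp add: power2_eq_square power_mult_distrib)
    show ?thesis by (simp add: wk power2_eq_square algebra_simps)
  qed
  have "(\<Sum>k<n. \<alpha> * (y - w ^ k * x) + \<beta> * (y - w ^ k * x)\<^sup>2)
      = (\<Sum>k<n. (\<alpha> * y + \<beta> * y\<^sup>2) - ((\<alpha> + 2 * \<beta> * y) * x) * w ^ k + (\<beta> * x\<^sup>2) * (w ^ 2) ^ k)"
    by (simp only: eq)
  also have "\<dots> = of_nat n * (\<alpha> * y + \<beta> * y\<^sup>2) - ((\<alpha> + 2 * \<beta> * y) * x) * (\<Sum>k<n. w ^ k) + (\<beta> * x\<^sup>2) * (\<Sum>k<n. (w ^ 2) ^ k)"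
    by (simp add: sum.distrib sum_subtractf sum_distrib_left)
  also have "\<dots> = of_nat n * (\<alpha> * y + \<beta> * y\<^sup>2)" by (simp add: s1 s2)
  finally show ?thesis .
qed

lemma exp_quad_prod:
  assumes n: "n \<ge> 3"
  defines "w \<equiv> exp (2 * of_real pi * \<i> / of_nat n)"
  shows "(\<Prod>k<n. exp (\<alpha> * (y - w ^ k * x) + \<beta> * (y - w ^ k * x)\<^sup>2)) = exp (\<alpha> * y + \<beta> * y\<^sup>2) ^ n"
  by (simp add: exp_sum[symmetric] quad_sum[OF n] w_def exp_of_nat_mult)

lemma EE_prod:
  assumes n: "n \<ge> 3"
  defines "w \<equiv> exp (2 * of_real pi * \<i> / of_nat n)"
  shows "(\<Prod>k<n. EE (y - w ^ k * x)) = EE y ^ n"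
proof -
  define c :: complex where "c = of_real (ln (2 * pi))"
  define \<alpha> where "\<alpha> = c / 2 - 1 / 2"
  define \<beta> where "\<beta> = - 1 / 2 - of_real euler_mascheroni / (2::complex)"
  have EEq: "EE z = exp (\<alpha> * z + \<beta> * z\<^sup>2)" for z
    unfolding EE_def exp_add[symmetric] c_def[symmetric] \<alpha>_def \<beta>_def
    by (rule arg_cong[where f = exp]) (simp add: field_simps power2_eq_square)
  show ?thesis unfolding EEq w_def by (rule exp_quad_prod[OF n])
qed

lemma FF_prod:
  assumes n: "n \<ge> 3" and am: "a + of_nat m \<noteq> 0"
  defines "w \<equiv> exp (2 * of_real pi * \<i> / of_nat n)"
  shows "(\<Prod>k<n. FF m (a - 1 - w ^ k * x)) = FF m (a - 1) ^ n * (1 - x ^ n / (a + of_nat m) ^ n) ^ (m + 1)"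
proof -
  define s :: complex where "s = of_nat (Suc m)"
  have s0: "s \<noteq> 0" unfolding s_def by (metis of_nat_eq_0_iff nat.distinct(1))
  define y where "y = a - 1"
  define \<alpha> :: complex where "\<alpha> = -1"
  define \<beta> where "\<beta> = 1 / (2 * s)"
  define b where "b = 1 + y / s"
  have b: "b = (a + of_nat m) / s" using s0 by (simp add: b_def y_def s_def field_simps)
  have FFq: "FF m z = (1 + z / s) ^ Suc m * exp (\<alpha> * z + \<beta> * z\<^sup>2)" for z
    unfolding FF_def s_def[symmetric] \<alpha>_def \<beta>_def by (simp add: field_simps)
  have A: "(\<Prod>k<n. (1 + (y - w ^ k * x) / s)) = b ^ n * (1 - x ^ n / (a + of_nat m) ^ n)"
  proof -
    have "(\<Prod>k<n. (1 + (y - w ^ k * x) / s)) = (\<Prod>k<n. (b - w ^ k * (x / s)))"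
      using s0 by (intro prod.cong) (auto simp: b_def field_simps)
    also have "\<dots> = b ^ n - (x / s) ^ n" unfolding w_def by (rule prod_root) (use n in auto)
    also have "\<dots> = b ^ n * (1 - x ^ n / (a + of_nat m) ^ n)"
      using s0 am by (simp add: b field_simps power_divide)
    finally show ?thesis .
  qed
  have "(\<Prod>k<n. FF m (y - w ^ k * x))
      = (\<Prod>k<n. (1 + (y - w ^ k * x) / s)) ^ Suc m * (\<Prod>k<n. exp (\<alpha> * (y - w ^ k * x) + \<beta> * (y - w ^ k * x)\<^sup>2))"
    by (simp add: FFq prod.distrib prod_power_distrib)
  also have "\<dots> = (b ^ n * (1 - x ^ n / (a + of_nat m) ^ n)) ^ Suc m * exp (\<alpha> * y + \<beta> * y\<^sup>2) ^ n"
    unfolding A by (simp add: w_def exp_quad_prod[OF n])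
  also have "\<dots> = FF m y ^ n * (1 - x ^ n / (a + of_nat m) ^ n) ^ (m + 1)"
  proof -
    have bb: "(b ^ n) ^ Suc m = (b ^ Suc m) ^ n" by (metis power_mult mult.commute)
    have fy: "FF m y = b ^ Suc m * exp (\<alpha> * y + \<beta> * y\<^sup>2)" by (simp only: FFq b_def)
    show ?thesis unfolding fy power_mult_distrib bb by simp
  qed
  finally show ?thesis by (simp add: y_def)
qed




lemma f_bound:
  fixes a x :: complex
  assumes n: "n \<ge> 3" and x: "norm x \<le> R" and R: "R \<ge> 0" and m: "2 * norm a + 1 \<le> real m"
  shows "norm ((1 - x ^ n / (a + of_nat m) ^ n) ^ (m + 1) - 1) \<le> (2 * R) ^ n * exp ((2 * R) ^ n) / (real (Suc m))\<^sup>2"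
proof -
  define s where "s = real (Suc m)"
  have s1: "s \<ge> 1" by (simp add: s_def)
  have "real m = norm ((a + of_nat m) - a)" by (simp add: norm_of_nat)
  also have "\<dots> \<le> norm (a + of_nat m) + norm a" by (rule norm_triangle_ineq4)
  finally have am: "s / 2 \<le> norm (a + of_nat m)" using m by (simp add: s_def)
  have s2: "s / 2 > 0" using s1 by simp
  have "norm ((1 - x ^ n / (a + of_nat m) ^ n) - 1) = norm x ^ n / norm (a + of_nat m) ^ n"
    by (simp add: norm_divide norm_power)
  also have "\<dots> \<le> R ^ n / (s / 2) ^ n"
    using x am s2 R by (intro frac_le power_mono zero_less_power) auto
  also have "\<dots> = (2 * R) ^ n / s ^ n" by (simp add: power_divide power_mult_distrib field_simps)
  also have "\<dots> \<le> (2 * R) ^ n / s ^ 3"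
    using s1 n R by (intro divide_left_mono power_increasing mult_pos_pos) auto
  finally have "norm ((1 - x ^ n / (a + of_nat m) ^ n) - 1) \<le> (2 * R) ^ n / (real (Suc m)) ^ 3"
    by (simp add: s_def)
  hence "norm ((1 - x ^ n / (a + of_nat m) ^ n) ^ Suc m - 1) \<le> (2 * R) ^ n * exp ((2 * R) ^ n) / (real (Suc m))\<^sup>2"
    by (intro pow_sub1_bound) (use R in auto)
  thus ?thesis by simp
qed

theorem mainTheorem7:
  fixes n :: nat and a :: complex
  assumes "n \<ge> 3"
    and "\<forall>m::nat. a \<noteq> - of_nat m"
  shows "(\<forall>x::complex.
            (\<lambda>m::nat. (1 - x ^ n / (a + of_nat m) ^ n) ^ (m + 1)) has_prod
            (\<Prod>k<n. barnesG (a - exp (2 * of_real pi * \<i> / of_nat n) ^ k * x) / barnesG a))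
      \<and> (\<forall>K::complex set. compact K \<longrightarrow>
            uniform_limit K
              (\<lambda>N x. \<Prod>m<N. (1 - x ^ n / (a + of_nat m) ^ n) ^ (m + 1))
              (\<lambda>x. \<Prod>k<n. barnesG (a - exp (2 * of_real pi * \<i> / of_nat n) ^ k * x) / barnesG a)
              sequentially)"
proof -
  note n = assms(1)
  define w where "w = exp (2 * of_real pi * \<i> / of_nat n)"
  define P where "P z = (\<Prod>m. FF m z)" for z
  define y where "y = a - 1"
  have am: "a + of_nat m \<noteq> 0" for m
  proof
    assume "a + of_nat m = 0"
    hence "a = - of_nat m" by (simp add: eq_neg_iff_add_eq_0)
    with assms(2) show False by blast
  qed
  have FFy: "FF m y \<noteq> 0" for m
  proof
    assume "FF m y = 0"
    hence "- y / of_nat (Suc m) = 1" by (auto simp: FF_wf)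
    hence "a + of_nat m = 0" by (simp add: y_def field_simps)
    with am show False by blast
  qed
  have EEy: "EE y \<noteq> 0" by (simp add: EE_def)
  have fm: "(1 - x ^ n / (a + of_nat m) ^ n) ^ (m + 1) = (\<Prod>k<n. FF m (y - w ^ k * x)) / FF m y ^ n" for x m
    using FF_prod[OF n am[of m], of x] FFy[of m] unfolding y_def w_def by (simp add: field_simps)
  have val: "(\<Prod>k<n. barnesG (a - w ^ k * x) / barnesG a) = (\<Prod>k<n. P (y - w ^ k * x)) / P y ^ n" for x
  proof -
    have bg: "barnesG (a - w ^ k * x) = EE (y - w ^ k * x) * P (y - w ^ k * x)" for k
      using barnesG_eq[of "a - w ^ k * x"] by (simp add: y_def P_def algebra_simps)
    have ba: "barnesG a = EE y * P y" using barnesG_eq[of a] by (simp add: y_def P_def)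
    have "(\<Prod>k<n. barnesG (a - w ^ k * x) / barnesG a)
        = ((\<Prod>k<n. EE (y - w ^ k * x)) * (\<Prod>k<n. P (y - w ^ k * x))) / (EE y ^ n * P y ^ n)"
      by (simp add: bg ba prod_dividef prod.distrib power_mult_distrib)
    also have "\<dots> = (\<Prod>k<n. P (y - w ^ k * x)) / P y ^ n"
      using EE_prod[OF n, of y x] EEy unfolding w_def[symmetric] by simp
    finally show ?thesis .
  qed
  have hp: "(\<lambda>m::nat. (1 - x ^ n / (a + of_nat m) ^ n) ^ (m + 1)) has_prod
            (\<Prod>k<n. barnesG (a - w ^ k * x) / barnesG a)" for x
  proof -
    have "(\<lambda>m. (\<Prod>k<n. FF m (y - w ^ k * x)) / FF m y ^ n) has_prod ((\<Prod>k<n. P (y - w ^ k * x)) / P y ^ n)"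
      by (intro has_prod_divide has_prod_prod has_prod_power)
         (auto simp: P_def intro!: convergent_prod_has_prod FF_convergent)
    thus ?thesis unfolding val fm .
  qed
  have unif: "uniform_limit K
              (\<lambda>N x. \<Prod>m<N. (1 - x ^ n / (a + of_nat m) ^ n) ^ (m + 1))
              (\<lambda>x. \<Prod>k<n. barnesG (a - w ^ k * x) / barnesG a)
              sequentially" if K: "compact K" for K
  proof -
    obtain R where R: "R > 0" "\<And>x. x \<in> K \<Longrightarrow> norm x \<le> R"
      using compact_imp_bounded[OF K] unfolding bounded_pos by blast
    have "uniformly_convergent_on K (\<lambda>N x. \<Prod>m<N. (1 - x ^ n / (a + of_nat m) ^ n) ^ (m + 1))"
    proof (rule uniformly_convergent_on_prod')
      show "continuous_on K (\<lambda>x. (1 - x ^ n / (a + of_nat m) ^ n) ^ (m + 1))" for m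
        by (intro continuous_intros) (simp add: am)
      show "compact K" by fact
      show "uniformly_convergent_on K (\<lambda>N x. \<Sum>m<N. norm ((1 - x ^ n / (a + of_nat m) ^ n) ^ (m + 1) - 1))"
      proof (rule Weierstrass_m_test'_ev)
        have "eventually (\<lambda>m. 2 * norm a + 1 \<le> real m) sequentially" by real_asymp
        thus "eventually (\<lambda>m. \<forall>x\<in>K. norm (norm ((1 - x ^ n / (a + of_nat m) ^ n) ^ (m + 1) - 1))
                 \<le> (2 * R) ^ n * exp ((2 * R) ^ n) / (real (Suc m))\<^sup>2) sequentially"
        proof eventually_elim
          case (elim m)
          show ?case
          proof (intro ballI)
            fix x assume x: "x \<in> K"
            from f_bound[OF n R(2)[OF x] less_imp_le[OF R(1)] elim]
            show "norm (norm ((1 - x ^ n / (a + of_nat m) ^ n) ^ (m + 1) - 1))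
                 \<le> (2 * R) ^ n * exp ((2 * R) ^ n) / (real (Suc m))\<^sup>2" by simp
          qed
        qed
      qed (rule summable_inv_sq)
    qed
    then obtain g where g: "uniform_limit K (\<lambda>N x. \<Prod>m<N. (1 - x ^ n / (a + of_nat m) ^ n) ^ (m + 1)) g sequentially"
      by (auto simp: uniformly_convergent_on_def)
    also have "?this \<longleftrightarrow> ?thesis"
    proof (intro uniform_limit_cong)
      fix x assume "x \<in> K"
      with g have "(\<lambda>N. \<Prod>m<N. (1 - x ^ n / (a + of_nat m) ^ n) ^ (m + 1)) \<longlonglongrightarrow> g x"
        using tendsto_uniform_limitI[OF g \<open>x \<in> K\<close>] by simp
      moreover have "(\<lambda>N. \<Prod>m<N. (1 - x ^ n / (a + of_nat m) ^ n) ^ (m + 1)) \<longlonglongrightarrow> (\<Prod>k<n. barnesG (a - w ^ k * x) / barnesG a)"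
        using has_prod_imp_tendsto'[OF hp[of x]] .
      ultimately show "g x = (\<Prod>k<n. barnesG (a - w ^ k * x) / barnesG a)"
        using LIMSEQ_unique by blast
    qed auto
    finally show ?thesis .
  qed
  show ?thesis using hp unif unfolding w_def by blast
qed


end
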